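(* Every CPS tensor $\mathcal{A}\in\mathbb{C}^{n\times n\times n\times n}$ can be written as \[ \mathcal{A}=\sum_{i=1}^R\alpha_i\big(p_i\otimes p_i\otimes\bar q_i\otimes\bar q_i+q_i\otimes q_i\otimes\bar p_i\otimes\bar p_i\big), \] with $\alpha_i\in\mathbb{R}$ and $p_i,q_i\in\mathbb{C}^n$ for $i=1,\dots,R$. If $\mathcal{A}$ has real entries, then the $p_i,q_i$ can be chosen in $\mathbb{R}^n$.
   Context: A tensor $\mathcal{A}\in\mathbb{C}^{n\times n\times n\times n}$ is conjugate partial-symmetric (CPS) if $\mathcal{A}_{ijkl}=\overline{\mathcal{A}_{klij}}$ and $\mathcal{A}_{ijkl}=\mathcal{A}_{jikl}=\mathcal{A}_{ijlk}$ for all indices. $(u\otimes v\otimes w\otimes z)_{ijkl}=u_iv_jw_kz_l$. *)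

theory Defs
  imports "HOL-Analysis.Analysis"
begin

text \<open>Fourth-order tensors in C^(n x n x n x n) are represented as functions
  nat => nat => nat => nat => complex, only the values at indices < n matter.
  Vectors in C^n are functions nat => complex (entries at indices < n).\<close>

type_synonym tensor4 = "nat \<Rightarrow> nat \<Rightarrow> nat \<Rightarrow> nat \<Rightarrow> complex"

definition CPS :: "nat \<Rightarrow> tensor4 \<Rightarrow> bool" where
  "CPS n A \<longleftrightarrow> (\<forall>i<n. \<forall>j<n. \<forall>k<n. \<forall>l<n.
      A i j k l = cnj (A k l i j) \<and> A i j k l = A j i k l \<and> A i j k l = A i j l k)"

definition outer4 :: "(nat \<Rightarrow> complex) \<Rightarrow> (nat \<Rightarrow> complex) \<Rightarrow> (nat \<Rightarrow> complex) \<Rightarrow> (nat \<Rightarrow> complex) \<Rightarrow> tensor4" where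
  "outer4 u v w z = (\<lambda>i j k l. u i * v j * w k * z l)"

definition cnjv :: "(nat \<Rightarrow> complex) \<Rightarrow> nat \<Rightarrow> complex" where
  "cnjv u = (\<lambda>i. cnj (u i))"

definition cps_decomp :: "nat \<Rightarrow> tensor4 \<Rightarrow> nat \<Rightarrow> (nat \<Rightarrow> real) \<Rightarrow> (nat \<Rightarrow> nat \<Rightarrow> complex) \<Rightarrow> (nat \<Rightarrow> nat \<Rightarrow> complex) \<Rightarrow> bool" where
  "cps_decomp n A R \<alpha> p q \<longleftrightarrow> (\<forall>i<n. \<forall>j<n. \<forall>k<n. \<forall>l<n.
      A i j k l = (\<Sum>r<R. complex_of_real (\<alpha> r) *
         (outer4 (p r) (p r) (cnjv (q r)) (cnjv (q r)) i j k l
          + outer4 (q r) (q r) (cnjv (p r)) (cnjv (p r)) i j k l)))"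

end

theory Submission
  imports Defs
begin

definition sgc :: "bool \<Rightarrow> real" where "sgc b = (if b then 1 else -1)"
definition dd :: "nat \<Rightarrow> nat \<Rightarrow> complex" where "dd a b = (if a = b then 1 else 0)"
definition vv :: "nat \<Rightarrow> nat \<Rightarrow> bool \<Rightarrow> nat \<Rightarrow> complex" where
  "vv i j s m = dd i m + of_real (sgc s) * dd j m"
lemma cnj_dd[simp]: "cnj (dd a b) = dd a b" by (simp add: dd_def)
lemma dd_real[simp]: "dd a b \<in> \<real>" by (simp add: dd_def)

lemma vsum: "(\<Sum>s\<in>UNIV. of_real (sgc s) * (vv i j s i0 * vv i j s j0))
   = 2 * (dd i i0 * dd j j0 + dd j i0 * dd i j0)"
  by (simp add: UNIV_bool vv_def sgc_def algebra_simps)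

lemma dsum: assumes "a < n" shows "(\<Sum>i<n. dd i a * f i) = f a"
proof -
  have "(\<lambda>i. dd i a * f i) = (\<lambda>i. if i = a then f i else 0)" by (auto simp: dd_def)
  then show ?thesis using assms by (simp only:) (simp add: sum.delta')
qed

lemma dsum': "a < n \<Longrightarrow> (\<Sum>i<n. f i * dd i a) = f a"
  using dsum[of a n f] by (simp add: mult.commute)

lemma G:
  assumes "i0<n" "j0<n" "k0<n" "l0<n"
  shows "(\<Sum>i<n. \<Sum>j<n. \<Sum>k<n. \<Sum>l<n. B i j k l * ((dd i i0 * dd j j0 + dd j i0 * dd i j0) * (dd k k0 * dd l l0 + dd l k0 * dd k l0)))
    = B i0 j0 k0 l0 + B i0 j0 l0 k0 + B j0 i0 k0 l0 + B j0 i0 l0 k0"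
proof -
  have e: "B i j k l * ((dd i i0 * dd j j0 + dd j i0 * dd i j0) * (dd k k0 * dd l l0 + dd l k0 * dd k l0))
    = dd i i0 * (dd j j0 * (dd k k0 * (dd l l0 * B i j k l))) + dd i i0 * (dd j j0 * (dd l k0 * (dd k l0 * B i j k l)))
     + dd i j0 * (dd j i0 * (dd k k0 * (dd l l0 * B i j k l))) + dd i j0 * (dd j i0 * (dd l k0 * (dd k l0 * B i j k l)))" for i j k l
    by (simp add: algebra_simps)
  show ?thesis unfolding e using assms
    by (simp add: sum.distrib dsum dsum' sum_distrib_left[symmetric] mult.assoc)
qed

lemma G2:
  assumes "i0<n" "j0<n" "k0<n" "l0<n"
  shows "(\<Sum>i<n. \<Sum>j<n. \<Sum>k<n. \<Sum>l<n. B i j k l * ((dd k i0 * dd l j0 + dd l i0 * dd k j0) * (dd i k0 * dd j l0 + dd j k0 * dd i l0)))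
    = B k0 l0 i0 j0 + B k0 l0 j0 i0 + B l0 k0 i0 j0 + B l0 k0 j0 i0"
proof -
  have e: "B i j k l * ((dd k i0 * dd l j0 + dd l i0 * dd k j0) * (dd i k0 * dd j l0 + dd j k0 * dd i l0))
    = dd i k0 * (dd j l0 * (dd k i0 * (dd l j0 * B i j k l))) + dd i k0 * (dd j l0 * (dd k j0 * (dd l i0 * B i j k l)))
     + dd i l0 * (dd j k0 * (dd k i0 * (dd l j0 * B i j k l))) + dd i l0 * (dd j k0 * (dd k j0 * (dd l i0 * B i j k l)))" for i j k l
    by (simp add: algebra_simps)
  show ?thesis unfolding e using assms
    by (simp add: sum.distrib dsum dsum' sum_distrib_left[symmetric] mult.assoc)
qed

lemma cnj_vv[simp]: "cnj (vv i j s m) = vv i j s m"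
  by (simp add: vv_def)

lemma vv_real: "vv i j s m \<in> \<real>"
  by (simp add: vv_def)

lemma pointwise:
  fixes c :: real and L :: complex
  shows "(\<Sum>s\<in>UNIV. \<Sum>t\<in>UNIV. complex_of_real (c * sgc s * sgc t / 32) *
       (outer4 (\<lambda>m. L * vv i j s m) (\<lambda>m. L * vv i j s m) (cnjv (vv k l t)) (cnjv (vv k l t)) i0 j0 k0 l0
      + outer4 (vv k l t) (vv k l t) (cnjv (\<lambda>m. L * vv i j s m)) (cnjv (\<lambda>m. L * vv i j s m)) i0 j0 k0 l0))
   = (of_real c * L^2) / 8 * ((dd i i0 * dd j j0 + dd j i0 * dd i j0) * (dd k k0 * dd l l0 + dd l k0 * dd k l0))
   + cnj (of_real c * L^2) / 8 * ((dd k i0 * dd l j0 + dd l i0 * dd k j0) * (dd i k0 * dd j l0 + dd j k0 * dd i l0))"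
proof -
  have eq: "complex_of_real (c * sgc s * sgc t / 32) *
       (outer4 (\<lambda>m. L * vv i j s m) (\<lambda>m. L * vv i j s m) (cnjv (vv k l t)) (cnjv (vv k l t)) i0 j0 k0 l0
      + outer4 (vv k l t) (vv k l t) (cnjv (\<lambda>m. L * vv i j s m)) (cnjv (\<lambda>m. L * vv i j s m)) i0 j0 k0 l0)
    = of_real c / 32 * (L^2 * ((of_real (sgc s) * (vv i j s i0 * vv i j s j0)) * (of_real (sgc t) * (vv k l t k0 * vv k l t l0)))
       + cnj L ^2 * ((of_real (sgc t) * (vv k l t i0 * vv k l t j0)) * (of_real (sgc s) * (vv i j s k0 * vv i j s l0))))" for s t
    by (simp add: outer4_def cnjv_def algebra_simps power2_eq_square)
  have "(\<Sum>s\<in>UNIV. \<Sum>t\<in>UNIV. of_real c / 32 * (L^2 * ((of_real (sgc s) * (vv i j s i0 * vv i j s j0)) * (of_real (sgc t) * (vv k l t k0 * vv k l t l0)))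
       + cnj L ^2 * ((of_real (sgc t) * (vv k l t i0 * vv k l t j0)) * (of_real (sgc s) * (vv i j s k0 * vv i j s l0)))))
     = of_real c / 32 * (L^2 * ((\<Sum>s\<in>UNIV. of_real (sgc s) * (vv i j s i0 * vv i j s j0)) * (\<Sum>t\<in>UNIV. of_real (sgc t) * (vv k l t k0 * vv k l t l0)))
       + cnj L ^2 * ((\<Sum>t\<in>UNIV. of_real (sgc t) * (vv k l t i0 * vv k l t j0)) * (\<Sum>s\<in>UNIV. of_real (sgc s) * (vv i j s k0 * vv i j s l0))))"
    by (simp add: UNIV_bool algebra_simps)
  also have "\<dots> = (of_real c * L^2) / 8 * ((dd i i0 * dd j j0 + dd j i0 * dd i j0) * (dd k k0 * dd l l0 + dd l k0 * dd k l0))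
   + cnj (of_real c * L^2) / 8 * ((dd k i0 * dd l j0 + dd l i0 * dd k j0) * (dd i k0 * dd j l0 + dd j k0 * dd i l0))"
    unfolding vsum by (simp add: algebra_simps)
  finally show ?thesis unfolding eq .
qed

lemma core:
  assumes cps: "CPS n A"
    and H: "\<forall>i<n. \<forall>j<n. \<forall>k<n. \<forall>l<n. complex_of_real (a i j k l) * (lam i j k l)^2 = A i j k l"
  shows "\<exists>R \<alpha> p q. cps_decomp n A R \<alpha> p q \<and>
     ((\<forall>i j k l. lam i j k l \<in> \<real>) \<longrightarrow> (\<forall>r<R. \<forall>i<n. p r i \<in> \<real> \<and> q r i \<in> \<real>))"
proof -
  define S where "S = {..<n} \<times> {..<n} \<times> {..<n} \<times> {..<n} \<times> (UNIV::bool set) \<times> (UNIV::bool set)"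
  have fin: "finite S" by (simp add: S_def)
  obtain g where g: "bij_betw g {0..<card S} S" using ex_bij_betw_nat_finite[OF fin] by blast
  define al where "al = (\<lambda>x::nat\<times>nat\<times>nat\<times>nat\<times>bool\<times>bool. case x of (i,j,k,l,s,t) \<Rightarrow> a i j k l * sgc s * sgc t / 32)"
  define P where "P = (\<lambda>x::nat\<times>nat\<times>nat\<times>nat\<times>bool\<times>bool. case x of (i,j,k,l,s,t) \<Rightarrow> (\<lambda>m. lam i j k l * vv i j s m))"
  define Q where "Q = (\<lambda>x::nat\<times>nat\<times>nat\<times>nat\<times>bool\<times>bool. case x of (i,j,k,l,s,t) \<Rightarrow> vv k l t)"
  have dec: "cps_decomp n A (card S) (al \<circ> g) (P \<circ> g) (Q \<circ> g)"
    unfolding cps_decomp_def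
  proof (intro allI impI)
    fix i0 j0 k0 l0 assume i0: "i0 < n" and j0: "j0 < n" and k0: "k0 < n" and l0: "l0 < n"
    define F where "F x = complex_of_real (al x) * (outer4 (P x) (P x) (cnjv (Q x)) (cnjv (Q x)) i0 j0 k0 l0
          + outer4 (Q x) (Q x) (cnjv (P x)) (cnjv (P x)) i0 j0 k0 l0)" for x
    define D1 where "D1 i j k l = ((dd i i0 * dd j j0 + dd j i0 * dd i j0) * (dd k k0 * dd l l0 + dd l k0 * dd k l0))" for i j k l
    define D2 where "D2 i j k l = ((dd k i0 * dd l j0 + dd l i0 * dd k j0) * (dd i k0 * dd j l0 + dd j k0 * dd i l0))" for i j k l
    have "(\<Sum>r<card S. F (g r)) = (\<Sum>x\<in>S. F x)"
      using sum.reindex_bij_betw[OF g, of F] by (simp add: atLeast0LessThan)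
    also have "\<dots> = (\<Sum>i<n. \<Sum>j<n. \<Sum>k<n. \<Sum>l<n. \<Sum>s\<in>UNIV. \<Sum>t\<in>UNIV. F (i,j,k,l,s,t))"
      by (simp add: S_def sum.cartesian_product)
    also have "\<dots> = (\<Sum>i<n. \<Sum>j<n. \<Sum>k<n. \<Sum>l<n. A i j k l / 8 * D1 i j k l + cnj (A i j k l) / 8 * D2 i j k l)"
    proof (intro sum.cong refl)
      fix i j k l assume "i \<in> {..<n}" "j \<in> {..<n}" "k \<in> {..<n}" "l \<in> {..<n}"
      then have HA: "complex_of_real (a i j k l) * (lam i j k l)^2 = A i j k l" using H by auto
      show "(\<Sum>s\<in>UNIV. \<Sum>t\<in>UNIV. F (i,j,k,l,s,t)) = A i j k l / 8 * D1 i j k l + cnj (A i j k l) / 8 * D2 i j k l"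
        unfolding F_def al_def P_def Q_def D1_def D2_def HA[symmetric]
        using pointwise[where c="a i j k l" and L="lam i j k l" and i=i and j=j and k=k and l=l and i0=i0 and j0=j0 and k0=k0 and l0=l0] by simp
    qed
    also have "\<dots> = (\<Sum>i<n. \<Sum>j<n. \<Sum>k<n. \<Sum>l<n. A i j k l / 8 * D1 i j k l)
        + (\<Sum>i<n. \<Sum>j<n. \<Sum>k<n. \<Sum>l<n. cnj (A i j k l) / 8 * D2 i j k l)"
      by (simp add: sum.distrib)
    also have "\<dots> = A i0 j0 k0 l0"
    proof -
      have 1: "(\<Sum>i<n. \<Sum>j<n. \<Sum>k<n. \<Sum>l<n. A i j k l / 8 * D1 i j k l)
          = A i0 j0 k0 l0 / 8 + A i0 j0 l0 k0 / 8 + A j0 i0 k0 l0 / 8 + A j0 i0 l0 k0 / 8"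
        unfolding D1_def using G[OF i0 j0 k0 l0, of "\<lambda>i j k l. A i j k l / 8"] by simp
      have 2: "(\<Sum>i<n. \<Sum>j<n. \<Sum>k<n. \<Sum>l<n. cnj (A i j k l) / 8 * D2 i j k l)
          = cnj (A k0 l0 i0 j0) / 8 + cnj (A k0 l0 j0 i0) / 8 + cnj (A l0 k0 i0 j0) / 8 + cnj (A l0 k0 j0 i0) / 8"
        unfolding D2_def using G2[OF i0 j0 k0 l0, of "\<lambda>i j k l. cnj (A i j k l) / 8"] by simp
      have s1: "A i0 j0 l0 k0 = A i0 j0 k0 l0" "A j0 i0 k0 l0 = A i0 j0 k0 l0" "A j0 i0 l0 k0 = A i0 j0 k0 l0"
        using cps i0 j0 k0 l0 unfolding CPS_def by metis+
      have s2: "cnj (A k0 l0 i0 j0) = A i0 j0 k0 l0" "cnj (A k0 l0 j0 i0) = A i0 j0 k0 l0"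
          "cnj (A l0 k0 i0 j0) = A i0 j0 k0 l0" "cnj (A l0 k0 j0 i0) = A i0 j0 k0 l0"
        using cps i0 j0 k0 l0 unfolding CPS_def by (metis complex_cnj_cnj)+
      show ?thesis unfolding 1 2 s1 s2 by simp
    qed
    finally show "A i0 j0 k0 l0 = (\<Sum>r<card S. complex_of_real ((al \<circ> g) r) *
        (outer4 ((P \<circ> g) r) ((P \<circ> g) r) (cnjv ((Q \<circ> g) r)) (cnjv ((Q \<circ> g) r)) i0 j0 k0 l0 +
         outer4 ((Q \<circ> g) r) ((Q \<circ> g) r) (cnjv ((P \<circ> g) r)) (cnjv ((P \<circ> g) r)) i0 j0 k0 l0))"
      unfolding F_def by simp
  qed
  have re: "(\<forall>i j k l. lam i j k l \<in> \<real>) \<longrightarrow> (\<forall>r<card S. \<forall>i<n. (P \<circ> g) r i \<in> \<real> \<and> (Q \<circ> g) r i \<in> \<real>)"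
    using vv_real by (auto simp: P_def Q_def split: prod.splits)
  show ?thesis using dec re by blast
qed

theorem corollary4p3:
  fixes n :: nat and A :: tensor4
  assumes "CPS n A"
  shows "(\<exists>R \<alpha> p q. cps_decomp n A R \<alpha> p q)
       \<and> ((\<forall>i<n. \<forall>j<n. \<forall>k<n. \<forall>l<n. A i j k l \<in> \<real>) \<longrightarrow>
            (\<exists>R \<alpha> p q. cps_decomp n A R \<alpha> p q \<and>
               (\<forall>r<R. \<forall>i<n. p r i \<in> \<real> \<and> q r i \<in> \<real>)))"
proof
  show "\<exists>R \<alpha> p q. cps_decomp n A R \<alpha> p q"
    using core[OF assms, of "\<lambda>i j k l. 1" "\<lambda>i j k l. csqrt (A i j k l)"] by auto
  show "(\<forall>i<n. \<forall>j<n. \<forall>k<n. \<forall>l<n. A i j k l \<in> \<real>) \<longrightarrow>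
            (\<exists>R \<alpha> p q. cps_decomp n A R \<alpha> p q \<and>
               (\<forall>r<R. \<forall>i<n. p r i \<in> \<real> \<and> q r i \<in> \<real>))"
  proof
    assume r: "\<forall>i<n. \<forall>j<n. \<forall>k<n. \<forall>l<n. A i j k l \<in> \<real>"
    show "\<exists>R \<alpha> p q. cps_decomp n A R \<alpha> p q \<and> (\<forall>r<R. \<forall>i<n. p r i \<in> \<real> \<and> q r i \<in> \<real>)"
      using core[OF assms, of "\<lambda>i j k l. Re (A i j k l)" "\<lambda>i j k l. 1"] r by auto
  qed
qed

end
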